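(* For all $\mathbf u\in C^3(\overline{\mathbb{B}^3})\times C^2(\overline{\mathbb{B}^3})$, \[ \operatorname{Re}(\tilde{\mathbf L}\mathbf u|\mathbf u)_3\le-\tfrac2{p-1}(\mathbf u|\mathbf u)_3. \]
   Context: Fix $p>3$. $\mathbb{B}^3$ is the open unit ball in $\mathbb{R}^3$, $\mathbb{S}^2=\partial\mathbb{B}^3$ with surface measure $\sigma$; repeated latin indices are summed from 1 to 3; functions are complex-valued. For $\mathbf u,\mathbf v\in C^2(\overline{\mathbb{B}^3})\times C^1(\overline{\mathbb{B}^3})$, $(\mathbf u|\mathbf v)_3=\int_{\mathbb{S}^2}[\omega^j\partial_ju_1+u_1+u_2](\omega)d\sigma(\omega)\int_{\mathbb{S}^2}\overline{[\omega^j\partial_jv_1+v_1+v_2](\omega)}d\sigma(\omega)$. For $\mathbf u\in C^3(\overline{\mathbb{B}^3})\times C^2(\overline{\mathbb{B}^3})$, $\tilde{\mathbf L}\mathbf u(\xi)=\big(-\xi^j\partial_ju_1(\xi)-\frac2{p-1}u_1(\xi)+u_2(\xi),\ \partial^j\partial_ju_1(\xi)-\xi^j\partial_ju_2(\xi)-\frac{p+1}{p-1}u_2(\xi)\big)$. *)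

theory Defs
  imports "HOL-Analysis.Analysis"
begin

type_synonym R3 = "real ^ 3"

abbreviation Bbar :: "R3 set" where "Bbar \<equiv> cball 0 1"

text \<open>Partial derivative in direction e_j, taken within the closed ball
  (one-sided at boundary points).\<close>
definition pd :: "3 \<Rightarrow> (R3 \<Rightarrow> complex) \<Rightarrow> R3 \<Rightarrow> complex" where
  "pd j f x = frechet_derivative f (at x within Bbar) (axis j 1)"

fun Ck :: "nat \<Rightarrow> (R3 \<Rightarrow> complex) \<Rightarrow> bool" where
  "Ck 0 f = continuous_on Bbar f"
| "Ck (Suc k) f = (continuous_on Bbar f \<and> (\<forall>x\<in>Bbar. f differentiable (at x within Bbar))
                   \<and> (\<forall>j. Ck k (pd j f)))"

text \<open>Surface integral over S^2 w.r.t. surface measure, via spherical coordinates.\<close>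
definition sph :: "real \<Rightarrow> real \<Rightarrow> R3" where
  "sph \<theta> \<phi> = vector [sin \<theta> * cos \<phi>, sin \<theta> * sin \<phi>, cos \<theta>]"

definition sphere_int :: "(R3 \<Rightarrow> complex) \<Rightarrow> complex" where
  "sphere_int g = integral {0..2*pi} (\<lambda>\<phi>. integral {0..pi} (\<lambda>\<theta>. g (sph \<theta> \<phi>) * of_real (sin \<theta>)))"

definition bdry :: "(R3 \<Rightarrow> complex) \<times> (R3 \<Rightarrow> complex) \<Rightarrow> R3 \<Rightarrow> complex" where
  "bdry u \<omega> = (\<Sum>j\<in>UNIV. of_real (\<omega> $ j) * pd j (fst u) \<omega>) + fst u \<omega> + snd u \<omega>"

definition ip3 :: "(R3 \<Rightarrow> complex) \<times> (R3 \<Rightarrow> complex) \<Rightarrow> (R3 \<Rightarrow> complex) \<times> (R3 \<Rightarrow> complex) \<Rightarrow> complex" where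
  "ip3 u v = sphere_int (bdry u) * cnj (sphere_int (bdry v))"

definition Lt :: "real \<Rightarrow> (R3 \<Rightarrow> complex) \<times> (R3 \<Rightarrow> complex) \<Rightarrow> (R3 \<Rightarrow> complex) \<times> (R3 \<Rightarrow> complex)" where
  "Lt p u = ((\<lambda>\<xi>. - (\<Sum>j\<in>UNIV. of_real (\<xi> $ j) * pd j (fst u) \<xi>) - of_real (2 / (p - 1)) * fst u \<xi> + snd u \<xi>),
             (\<lambda>\<xi>. (\<Sum>j\<in>UNIV. pd j (pd j (fst u)) \<xi>) - (\<Sum>j\<in>UNIV. of_real (\<xi> $ j) * pd j (snd u) \<xi>)
                   - of_real ((p + 1) / (p - 1)) * snd u \<xi>))"

end

theory Submission
  imports Defs
begin


lemma deriv_unique_cball: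
  fixes f :: "R3 \<Rightarrow> complex"
  assumes x: "x \<in> Bbar"
    and f1: "(f has_derivative f1) (at x within Bbar)"
    and f2: "(f has_derivative f2) (at x within Bbar)"
  shows "f1 = f2"
proof -
  have lin1: "linear f1" using f1 has_derivative_linear by blast
  have lin2: "linear f2" using f2 has_derivative_linear by blast
  have key: "f1 v = f2 v" if v: "norm (x + v) \<le> 1" for v
  proof -
    define g where "g = (\<lambda>t::real. x + t *\<^sub>R v)"
    have gsub: "g ` {0..1} \<subseteq> Bbar"
    proof
      fix y assume "y \<in> g ` {0..1}"
      then obtain t where t: "t \<in> {0..1}" "y = g t" by auto
      have "y = (1 - t) *\<^sub>R x + t *\<^sub>R (x + v)" using t by (simp add: g_def algebra_simps)
      hence "norm y \<le> (1 - t) * norm x + t * norm (x + v)"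
        using t by (metis (no_types, lifting) abs_of_nonneg atLeastAtMost_iff diff_ge_0_iff_ge norm_scaleR norm_triangle_ineq order_trans)
      also have "\<dots> \<le> (1 - t) * 1 + t * 1"
        using t x v by (intro add_mono mult_left_mono) auto
      finally show "y \<in> Bbar" by simp
    qed
    have gd: "(g has_derivative (\<lambda>s. s *\<^sub>R v)) (at 0 within {0..1})"
      unfolding g_def by (auto intro!: derivative_eq_intros)
    have g0: "g 0 = x" by (simp add: g_def)
    have c1: "((\<lambda>t. f (g t)) has_derivative (\<lambda>s. f1 (s *\<^sub>R v))) (at 0 within {0..1})"
      by (rule has_derivative_in_compose[OF gd]) (use has_derivative_subset[OF f1 gsub] g0 in simp)
    have c2: "((\<lambda>t. f (g t)) has_derivative (\<lambda>s. f2 (s *\<^sub>R v))) (at 0 within {0..1})"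
      by (rule has_derivative_in_compose[OF gd]) (use has_derivative_subset[OF f2 gsub] g0 in simp)
    have "((\<lambda>t. f (g t)) has_vector_derivative f1 v) (at 0 within cbox 0 1)"
      using c1 unfolding has_vector_derivative_def by (simp add: linear_scale[OF lin1])
    moreover have "((\<lambda>t. f (g t)) has_vector_derivative f2 v) (at 0 within cbox 0 1)"
      using c2 unfolding has_vector_derivative_def by (simp add: linear_scale[OF lin2])
    ultimately show ?thesis
      by (rule vector_derivative_unique_within_closed_interval[rotated 2]) auto
  qed
  show ?thesis
  proof (rule ext)
    fix h :: R3
    define e where "e = 1 / (1 + norm h)"
    have e: "e > 0" by (simp add: e_def add_pos_nonneg)
    have "norm (e *\<^sub>R h) \<le> 1"
      by (simp add: e_def divide_simps) (smt (verit) norm_ge_zero)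
    hence a: "f1 (- x + e *\<^sub>R h) = f2 (- x + e *\<^sub>R h)" by (intro key) simp
    have b: "f1 (- x) = f2 (- x)" by (intro key) simp
    have l1: "f1 (- x + e *\<^sub>R h) = f1 (- x) + e *\<^sub>R f1 h"
      using linear_add[OF lin1] linear_scale[OF lin1] by metis
    have l2: "f2 (- x + e *\<^sub>R h) = f2 (- x) + e *\<^sub>R f2 h"
      using linear_add[OF lin2] linear_scale[OF lin2] by metis
    have "e *\<^sub>R f1 h = e *\<^sub>R f2 h"
      using a b l1 l2 by simp
    thus "f1 h = f2 h" using e by simp
  qed
qed

lemma pd_eq:
  assumes "x \<in> Bbar" "(f has_derivative f') (at x within Bbar)"
  shows "pd j f x = f' (axis j 1)"
proof -
  have "f differentiable (at x within Bbar)" using assms(2) by (auto simp: differentiable_def)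
  hence "(f has_derivative frechet_derivative f (at x within Bbar)) (at x within Bbar)"
    by (rule frechet_derivative_works[THEN iffD1])
  from deriv_unique_cball[OF assms(1) this assms(2)] show ?thesis by (simp add: pd_def)
qed

lemma deriv_expand:
  fixes f :: "R3 \<Rightarrow> complex"
  assumes "x \<in> Bbar" "f differentiable (at x within Bbar)"
  shows "(f has_derivative (\<lambda>h. \<Sum>j\<in>UNIV. of_real (h $ j) * pd j f x)) (at x within Bbar)"
proof -
  let ?F = "frechet_derivative f (at x within Bbar)"
  have d: "(f has_derivative ?F) (at x within Bbar)"
    using assms(2) by (rule frechet_derivative_works[THEN iffD1])
  have lin: "linear ?F" using d has_derivative_linear by blast
  have "?F h = (\<Sum>j\<in>UNIV. of_real (h $ j) * pd j f x)" for h
  proof -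
    have "?F h = ?F (\<Sum>j\<in>UNIV. h $ j *\<^sub>R axis j 1)"
      using basis_expansion[of h] by (simp add: scalar_mult_eq_scaleR)
    also have "\<dots> = (\<Sum>j\<in>UNIV. h $ j *\<^sub>R ?F (axis j 1))"
      by (simp add: linear_sum[OF lin] linear_scale[OF lin])
    finally show ?thesis by (simp add: pd_def scaleR_conv_of_real)
  qed
  with d show ?thesis by (metis (no_types, lifting) ext)
qed

definition Sf :: "(R3 \<Rightarrow> complex) \<Rightarrow> R3 \<Rightarrow> complex" where
  "Sf u w = (\<Sum>j\<in>UNIV. pd j (pd j u) w) - (\<Sum>j\<in>UNIV. \<Sum>k\<in>UNIV. of_real (w$j) * of_real (w$k) * pd j (pd k u) w)
     - 2 * (\<Sum>j\<in>UNIV. of_real (w$j) * pd j u w)"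

lemma of_real_comp_deriv:
  "((\<lambda>\<xi>::R3. complex_of_real (\<xi> $ j)) has_derivative (\<lambda>h. of_real (h $ j))) F"
  by (intro bounded_linear_imp_has_derivative bounded_linear_compose[OF bounded_linear_of_real]
      bounded_linear_vec_nth)

lemma axis_mult: "complex_of_real ((axis j 1 :: R3) $ k) * z = (if k = j then z else 0)"
  by (simp add: axis_def)

lemma bdry_Lt:
  assumes w: "w \<in> Bbar" and d1: "u1 differentiable (at w within Bbar)"
    and d1k: "\<And>k. pd k u1 differentiable (at w within Bbar)"
    and d2: "u2 differentiable (at w within Bbar)" and p: "p \<noteq> 1"
  shows "bdry (Lt p (u1,u2)) w = - of_real (2/(p-1)) * bdry (u1,u2) w + Sf u1 w"
proof -
  define a where "a = 2/(p-1)"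
  have b: "(p+1)/(p-1) = 1 + a" using p by (simp add: a_def field_simps)
  let ?w1 = "\<lambda>\<xi>. - (\<Sum>j\<in>UNIV. of_real (\<xi> $ j) * pd j u1 \<xi>) - of_real a * u1 \<xi> + u2 \<xi>"
  have dw: "(?w1 has_derivative (\<lambda>h. - (\<Sum>j\<in>UNIV. of_real (w$j) * (\<Sum>k\<in>UNIV. of_real (h $ k) * pd k (pd j u1) w)
       + of_real (h$j) * pd j u1 w) - of_real a * (\<Sum>j\<in>UNIV. of_real (h $ j) * pd j u1 w)
       + (\<Sum>j\<in>UNIV. of_real (h $ j) * pd j u2 w))) (at w within Bbar)"
    using deriv_expand[OF w d1] deriv_expand[OF w d2] deriv_expand[OF w d1k]
    by (intro derivative_eq_intros has_derivative_sum) (auto intro: bounded_linear_imp_has_derivative bounded_linear_vec_nth)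
  have pdw: "pd j ?w1 w = - (pd j u1 w + (\<Sum>k\<in>UNIV. of_real (w$k) * pd j (pd k u1) w)) - of_real a * pd j u1 w + pd j u2 w" for j
    by (subst pd_eq[OF w dw]) (simp add: axis_mult sum.distrib)
  show ?thesis
    unfolding bdry_def Lt_def Sf_def fst_conv snd_conv pdw a_def[symmetric] b
    by (simp add: sum_3 algebra_simps)
qed



lemma vec3_eq: "(vector [a, b, c] :: R3) = a *\<^sub>R axis 1 1 + b *\<^sub>R axis 2 1 + c *\<^sub>R axis 3 1"
  by (simp add: vec_eq_iff forall_3 axis_def)

lemma vec3_deriv:
  assumes "(a has_real_derivative a') F" "(b has_real_derivative b') F" "(c has_real_derivative c') F"
  shows "((\<lambda>t. vector [a t, b t, c t] :: R3) has_vector_derivative vector [a', b', c']) F"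
proof -
  have s: "((\<lambda>t. f t *\<^sub>R v) has_vector_derivative f' *\<^sub>R v) F" if "(f has_real_derivative f') F" for f f' and v :: R3
    using bounded_linear.has_vector_derivative[OF bounded_linear_scaleR_left[of v] that[unfolded has_real_derivative_iff_has_vector_derivative]]
    by simp
  show ?thesis unfolding vec3_eq
    by (intro has_vector_derivative_add s assms)
qed

lemma sph_norm: "norm (sph t f) = 1"
proof -
  have "sph t f \<bullet> sph t f = (sin t * cos f)^2 + (sin t * sin f)^2 + (cos t)^2"
    by (simp add: sph_def inner_vec_def sum_3 power2_eq_square)
  also have "\<dots> = (sin t)^2 * ((sin f)^2 + (cos f)^2) + (cos t)^2" by algebra
  also have "\<dots> = 1" by (simp only: sin_cos_squared_add mult_1_right)
  finally show ?thesis by (simp add: norm_eq_sqrt_inner)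
qed

lemma sph_in: "sph t f \<in> Bbar"
  by (simp add: sph_norm)

lemma sph_dt: "((\<lambda>t. sph t f) has_vector_derivative vector [cos t * cos f, cos t * sin f, - sin t]) (at t)"
  unfolding sph_def by (intro vec3_deriv) (auto intro!: derivative_eq_intros)

lemma sph_df: "((\<lambda>f. sph t f) has_vector_derivative vector [sin t * (- sin f), sin t * cos f, 0]) (at f)"
  unfolding sph_def by (intro vec3_deriv) (auto intro!: derivative_eq_intros)

lemma sph_cont: "continuous_on UNIV (\<lambda>z. sph (fst z) (snd z))"
  unfolding sph_def vec3_eq by (intro continuous_intros)

lemma chain_path:
  fixes g :: "real \<Rightarrow> R3"
  assumes gin: "\<And>s. g s \<in> Bbar" and gd: "(g has_vector_derivative g') (at t)"
    and fd: "f differentiable (at (g t) within Bbar)"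
  shows "((\<lambda>s. f (g s)) has_vector_derivative (\<Sum>j\<in>UNIV. of_real (g' $ j) * pd j f (g t))) (at t)"
proof -
  have sub: "g ` UNIV \<subseteq> Bbar" using gin by auto
  have fd': "(f has_derivative (\<lambda>h. \<Sum>j\<in>UNIV. of_real (h $ j) * pd j f (g t))) (at (g t) within g ` UNIV)"
    by (rule has_derivative_subset[OF deriv_expand[OF gin fd] sub])
  have "((\<lambda>s. f (g s)) has_derivative (\<lambda>x. \<Sum>j\<in>UNIV. of_real ((x *\<^sub>R g') $ j) * pd j f (g t))) (at t)"
    using has_derivative_in_compose[OF gd[unfolded has_vector_derivative_def] fd'] by simp
  thus ?thesis unfolding has_vector_derivative_def
    by (simp only: vector_scaleR_component of_real_mult) (simp add: scaleR_conv_of_real sum_distrib_left mult.assoc)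
qed



lemma cont_slice1: "continuous_on UNIV (\<lambda>z. g (fst z) (snd z)) \<Longrightarrow> continuous_on S (\<lambda>t. g t f)"
  using continuous_on_compose2[of UNIV "\<lambda>z. g (fst z) (snd z)" S "\<lambda>t. (t, f)"]
    continuous_on_Pair[OF continuous_on_id continuous_on_const, of S f] by auto

lemma cont_slice2: "continuous_on UNIV (\<lambda>z. g (fst z) (snd z)) \<Longrightarrow> continuous_on S (\<lambda>f. g t f)"
  using continuous_on_compose2[of UNIV "\<lambda>z. g (fst z) (snd z)" S "\<lambda>f. (t, f)"]
    continuous_on_Pair[OF continuous_on_const continuous_on_id, of S t] by auto

lemma cont_sph: "continuous_on Bbar g \<Longrightarrow> continuous_on UNIV (\<lambda>z. g (sph (fst z) (snd z)))"
  by (rule continuous_on_compose2[OF _ sph_cont]) (auto simp: sph_norm)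

lemma sphere_Sf:
  assumes dd: "\<And>j x. x \<in> Bbar \<Longrightarrow> pd j u differentiable (at x within Bbar)"
    and c1: "\<And>j. continuous_on Bbar (pd j u)"
    and c2: "\<And>j k. continuous_on Bbar (pd k (pd j u))"
  shows "sphere_int (Sf u) = 0"
proof -
  define E where "E j t f = pd j u (sph t f)" for j t f
  define H where "H j k t f = pd k (pd j u) (sph t f)" for j k t f
  define Et where "Et j t f = of_real (cos t * cos f) * H j 1 t f + of_real (cos t * sin f) * H j 2 t f + of_real (- sin t) * H j 3 t f" for j t f
  define Ef where "Ef j t f = of_real (sin t * - sin f) * H j 1 t f + of_real (sin t * cos f) * H j 2 t f + of_real 0 * H j 3 t f" for j t f
  have dEt: "((\<lambda>t. E j t f) has_vector_derivative Et j t f) (at t)" for j t f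
    using chain_path[OF sph_in sph_dt dd[OF sph_in]] by (simp add: E_def H_def Et_def sum_3)
  have dEf: "((\<lambda>f. E j t f) has_vector_derivative Ef j t f) (at f)" for j t f
    using chain_path[OF sph_in sph_df dd[OF sph_in]] by (simp add: E_def H_def Ef_def sum_3)
  define A where "A t f = of_real (sin t) * (of_real (cos t * cos f) * E 1 t f + of_real (cos t * sin f) * E 2 t f + of_real (- sin t) * E 3 t f)" for t f
  define P where "P t f = of_real (cos t) * (of_real (cos t * cos f) * E 1 t f + of_real (cos t * sin f) * E 2 t f + of_real (- sin t) * E 3 t f)
     + of_real (sin t) * (of_real (- sin t * cos f) * E 1 t f + of_real (cos t * cos f) * Et 1 t f
        + of_real (- sin t * sin f) * E 2 t f + of_real (cos t * sin f) * Et 2 t f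
        + of_real (- cos t) * E 3 t f + of_real (- sin t) * Et 3 t f)" for t f
  define C where "C t f = of_real (- sin f) * E 1 t f + of_real (cos f) * E 2 t f" for t f
  define Q where "Q t f = of_real (- cos f) * E 1 t f + of_real (- sin f) * Ef 1 t f + of_real (- sin f) * E 2 t f + of_real (cos f) * Ef 2 t f" for t f
  have dA: "((\<lambda>t. A t f) has_vector_derivative P t f) (at t)" for t f
    unfolding A_def P_def
    by (rule derivative_eq_intros dEt refl | simp)+
  have dC: "((\<lambda>f. C t f) has_vector_derivative Q t f) (at f)" for t f
    unfolding C_def Q_def
    by (rule derivative_eq_intros dEf refl | simp)+
  have sc: "(complex_of_real (sin x))^2 + (complex_of_real (cos x))^2 = 1" for x
    by (metis of_real_add of_real_power sin_cos_squared_add of_real_1)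
  have sphc: "sph t f $ 1 = sin t * cos f" "sph t f $ 2 = sin t * sin f" "sph t f $ 3 = cos t" for t f
    by (simp_all add: sph_def)
  have ident: "Sf u (sph t f) * of_real (sin t) = P t f + Q t f" for t f
  proof -
    have "Sf u (sph t f) * of_real (sin t) = ((H 1 1 t f + H 2 2 t f + H 3 3 t f)
      - (of_real (sin t * cos f) * of_real (sin t * cos f) * H 1 1 t f + of_real (sin t * cos f) * of_real (sin t * sin f) * H 2 1 t f + of_real (sin t * cos f) * of_real (cos t) * H 3 1 t f
       + of_real (sin t * sin f) * of_real (sin t * cos f) * H 1 2 t f + of_real (sin t * sin f) * of_real (sin t * sin f) * H 2 2 t f + of_real (sin t * sin f) * of_real (cos t) * H 3 2 t f
       + of_real (cos t) * of_real (sin t * cos f) * H 1 3 t f + of_real (cos t) * of_real (sin t * sin f) * H 2 3 t f + of_real (cos t) * of_real (cos t) * H 3 3 t f)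
      - 2 * (of_real (sin t * cos f) * E 1 t f + of_real (sin t * sin f) * E 2 t f + of_real (cos t) * E 3 t f)) * of_real (sin t)"
      unfolding Sf_def by (simp add: sum_3 sphc E_def H_def)
    also have "\<dots> = P t f + Q t f"
      unfolding P_def Q_def Et_def Ef_def of_real_mult of_real_minus of_real_0
      using sc[of t] sc[of f] by algebra
    finally show ?thesis .
  qed
  have cE: "continuous_on UNIV (\<lambda>z. E j (fst z) (snd z))" for j
    unfolding E_def by (rule cont_sph[OF c1])
  have cH: "continuous_on UNIV (\<lambda>z. H j k (fst z) (snd z))" for j k
    unfolding H_def by (rule cont_sph[OF c2])
  have cP: "continuous_on UNIV (\<lambda>z. P (fst z) (snd z))"
    unfolding P_def Et_def by (intro continuous_intros cE cH)
  have cQ: "continuous_on UNIV (\<lambda>z. Q (fst z) (snd z))"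
    unfolding Q_def Ef_def by (intro continuous_intros cE cH)
  have intP: "integral {0..pi} (\<lambda>t. P t f) = 0" for f
  proof -
    have "((\<lambda>t. P t f) has_integral (A pi f - A 0 f)) {0..pi}"
      by (rule fundamental_theorem_of_calculus) (auto intro: has_vector_derivative_at_within dA)
    moreover have "A pi f - A 0 f = 0" by (simp add: A_def)
    ultimately show ?thesis by (simp add: integral_unique)
  qed
  have intQ: "integral {0..2*pi} (\<lambda>f. Q t f) = 0" for t
  proof -
    have "((\<lambda>f. Q t f) has_integral (C t (2*pi) - C t 0)) {0..2*pi}"
      by (rule fundamental_theorem_of_calculus) (auto intro: has_vector_derivative_at_within dC)
    moreover have "sph t (2*pi) = sph t 0" by (simp add: sph_def)
    hence "C t (2*pi) - C t 0 = 0" by (simp add: C_def E_def)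
    ultimately show ?thesis by (simp add: integral_unique)
  qed
  have inner: "integral {0..pi} (\<lambda>t. Sf u (sph t f) * of_real (sin t)) = integral {0..pi} (\<lambda>t. Q t f)" for f
  proof -
    have "integral {0..pi} (\<lambda>t. Sf u (sph t f) * of_real (sin t)) = integral {0..pi} (\<lambda>t. P t f + Q t f)"
      by (simp add: ident)
    also have "\<dots> = integral {0..pi} (\<lambda>t. P t f) + integral {0..pi} (\<lambda>t. Q t f)"
      by (intro integral_add integrable_continuous_interval cont_slice1[OF cP] cont_slice1[OF cQ])
    finally show ?thesis by (simp add: intP)
  qed
  have cQs: "continuous_on (cbox (0,0) (2*pi,pi)) (\<lambda>(x,y). Q y x)"
  proof -
    have "continuous_on UNIV (\<lambda>z. (\<lambda>z. Q (fst z) (snd z)) ((\<lambda>z. (snd z, fst z)) z))"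
      by (rule continuous_on_compose2[OF cQ]) (auto intro!: continuous_on_Pair continuous_on_fst continuous_on_snd continuous_on_id)
    thus ?thesis by (auto simp: case_prod_beta intro: continuous_on_subset)
  qed
  have "sphere_int (Sf u) = integral {0..2*pi} (\<lambda>f. integral {0..pi} (\<lambda>t. Q t f))"
    unfolding sphere_int_def by (simp add: inner)
  also have "\<dots> = integral {0..pi} (\<lambda>t. integral {0..2*pi} (\<lambda>f. Q t f))"
    using integral_swap_continuous[OF cQs] by simp
  also have "\<dots> = 0" by (simp add: intQ)
  finally show ?thesis .
qed



lemma sph_cont_swap: "continuous_on UNIV (\<lambda>z. sph (snd z) (fst z))"
  unfolding sph_def vec3_eq by (intro continuous_intros)

lemma cont_sph_swap:
  fixes g :: "R3 \<Rightarrow> complex"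
  assumes "continuous_on Bbar g"
  shows "continuous_on S (\<lambda>(x,t). g (sph t x) * of_real (sin t))"
proof -
  have "continuous_on UNIV (\<lambda>z. g (sph (snd z) (fst z)))"
    by (rule continuous_on_compose2[OF assms sph_cont_swap]) (auto simp: sph_norm)
  hence "continuous_on UNIV (\<lambda>z. g (sph (snd z) (fst z)) * of_real (sin (snd z)))"
    by (intro continuous_intros)
  thus ?thesis by (auto simp: case_prod_beta intro: continuous_on_subset)
qed

lemma sphere_int_lin:
  fixes g h :: "R3 \<Rightarrow> complex"
  assumes g: "continuous_on Bbar g" and h: "continuous_on Bbar h"
  shows "sphere_int (\<lambda>x. k * g x + h x) = k * sphere_int g + sphere_int h"
proof -
  define G where "G f = integral {0..pi} (\<lambda>t. g (sph t f) * of_real (sin t))" for f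
  define H where "H f = integral {0..pi} (\<lambda>t. h (sph t f) * of_real (sin t))" for f
  have ig: "(\<lambda>t. g (sph t f) * of_real (sin t)) integrable_on {0..pi}" for f
    by (intro integrable_continuous_interval cont_slice1[where g="\<lambda>t f. g (sph t f) * of_real (sin t)"]
       continuous_intros cont_sph[OF g])
  have ih: "(\<lambda>t. h (sph t f) * of_real (sin t)) integrable_on {0..pi}" for f
    by (intro integrable_continuous_interval cont_slice1[where g="\<lambda>t f. h (sph t f) * of_real (sin t)"]
       continuous_intros cont_sph[OF h])
  have inner: "integral {0..pi} (\<lambda>t. (k * g (sph t f) + h (sph t f)) * of_real (sin t)) = k * G f + H f" for f
  proof -
    have "integral {0..pi} (\<lambda>t. (k * g (sph t f) + h (sph t f)) * of_real (sin t))
        = integral {0..pi} (\<lambda>t. k * (g (sph t f) * of_real (sin t)) + h (sph t f) * of_real (sin t))"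
      by (simp add: algebra_simps)
    also have "\<dots> = k * G f + H f"
      unfolding G_def H_def
      by (subst integral_add) (auto intro: integrable_on_mult_right ig ih simp: integral_mult_right)
    finally show ?thesis .
  qed
  have cG: "continuous_on {0..2*pi} G"
    unfolding G_def using integral_continuous_on_param[OF cont_sph_swap[OF g], of "{0..2*pi}" 0 pi] by simp
  have cH: "continuous_on {0..2*pi} H"
    unfolding H_def using integral_continuous_on_param[OF cont_sph_swap[OF h], of "{0..2*pi}" 0 pi] by simp
  have "sphere_int (\<lambda>x. k * g x + h x) = integral {0..2*pi} (\<lambda>f. k * G f + H f)"
    unfolding sphere_int_def by (simp add: inner)
  also have "\<dots> = k * integral {0..2*pi} G + integral {0..2*pi} H"
    by (subst integral_add) (auto intro: integrable_on_mult_right integrable_continuous_interval cG cH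
         simp: integral_mult_right)
  finally show ?thesis unfolding sphere_int_def G_def H_def .
qed

theorem lemma3p2:
  fixes p :: real and u1 u2 :: "R3 \<Rightarrow> complex"
  assumes "p > 3" and "Ck 3 u1" and "Ck 2 u2"
  shows "Re (ip3 (Lt p (u1, u2)) (u1, u2)) \<le> - (2 / (p - 1)) * Re (ip3 (u1, u2) (u1, u2))"
proof -
  have p: "p \<noteq> 1" using assms(1) by simp
  have C3: "Ck (Suc (Suc (Suc 0))) u1" using assms(2) by (simp add: numeral_3_eq_3)
  have C2: "Ck (Suc (Suc 0)) u2" using assms(3) by (simp add: numeral_2_eq_2)
  have u1c: "continuous_on Bbar u1" and u1d: "\<And>x. x \<in> Bbar \<Longrightarrow> u1 differentiable (at x within Bbar)"
    and d1c: "\<And>j. continuous_on Bbar (pd j u1)" and d1d: "\<And>j x. x \<in> Bbar \<Longrightarrow> pd j u1 differentiable (at x within Bbar)"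
    and dd1c: "\<And>j k. continuous_on Bbar (pd k (pd j u1))"
    using C3 by auto
  have u2c: "continuous_on Bbar u2" and u2d: "\<And>x. x \<in> Bbar \<Longrightarrow> u2 differentiable (at x within Bbar)"
    and d2c: "\<And>j. continuous_on Bbar (pd j u2)"
    using C2 by auto
  define a where "a = 2 / (p - 1)"
  define I where "I = sphere_int (bdry (u1, u2))"
  have cb: "continuous_on Bbar (bdry (u1, u2))"
    unfolding bdry_def fst_conv snd_conv by (intro continuous_intros u1c u2c d1c)
  have cS: "continuous_on Bbar (Sf u1)"
    unfolding Sf_def by (intro continuous_intros d1c dd1c)
  have "sphere_int (bdry (Lt p (u1, u2))) = sphere_int (\<lambda>x. (- of_real a) * bdry (u1, u2) x + Sf u1 x)"
    unfolding sphere_int_def a_def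
    by (simp add: bdry_Lt[OF sph_in u1d[OF sph_in] d1d[OF sph_in] u2d[OF sph_in] p])
  also have "\<dots> = - of_real a * I"
  proof -
    have z: "sphere_int (Sf u1) = 0" by (rule sphere_Sf[OF d1d d1c dd1c])
    show ?thesis by (subst sphere_int_lin[OF cb cS]) (simp add: I_def z)
  qed
  finally have L: "sphere_int (bdry (Lt p (u1, u2))) = - of_real a * I" .
  show ?thesis
    unfolding ip3_def L I_def[symmetric] a_def[symmetric] by (simp add: algebra_simps)
qed

end
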